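(* Let $p$ be a prime, $\mathcal{O}$ an order in $B_p$, and let $\beta_1,\beta_2$ be linearly independent elements of $\mathcal{O}^T$. Suppose $N(\beta_1)\le p$ and that $\beta_2$ has minimal norm among the elements of $\beta_2+\mathbb{Z}\beta_1$. Then $|\frac12\mathrm{Tr}(\beta_1\overline{\beta_2})|$ equals the least non-negative integer $t$ with $t^2\equiv N(\beta_1)N(\beta_2)\pmod p$.
   Context: $B_p$ is the quaternion algebra over $\mathbb{Q}$ ramified exactly at $p$ and $\infty$, with canonical involution $\overline{x}$, reduced norm $N(x)=x\overline{x}$ and reduced trace $\mathrm{Tr}(x)=x+\overline{x}$. The Gross lattice of an order $\mathcal{O}$ is $\mathcal{O}^T=\{2x-\mathrm{Tr}(x):x\in\mathcal{O}\}$. *)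

theory Defs
  imports "HOL-Number_Theory.Number_Theory"
begin

text \<open>Quaternion algebras (a,b)_Q over the rationals: basis 1,i,j,k=ij with
  i^2 = a, j^2 = b, ij = -ji.  Elements are coordinate quadruples.\<close>

datatype quat = Quat rat rat rat rat

fun q0 :: "quat \<Rightarrow> rat" where "q0 (Quat x0 x1 x2 x3) = x0"

definition qof :: "rat \<Rightarrow> quat" where "qof r = Quat r 0 0 0"

fun qadd :: "quat \<Rightarrow> quat \<Rightarrow> quat" where
  "qadd (Quat x0 x1 x2 x3) (Quat y0 y1 y2 y3) = Quat (x0+y0) (x1+y1) (x2+y2) (x3+y3)"

fun qneg :: "quat \<Rightarrow> quat" where
  "qneg (Quat x0 x1 x2 x3) = Quat (-x0) (-x1) (-x2) (-x3)"

definition qsub :: "quat \<Rightarrow> quat \<Rightarrow> quat" where "qsub x y = qadd x (qneg y)"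

fun qscale :: "rat \<Rightarrow> quat \<Rightarrow> quat" where
  "qscale c (Quat x0 x1 x2 x3) = Quat (c*x0) (c*x1) (c*x2) (c*x3)"

fun qmul :: "rat \<Rightarrow> rat \<Rightarrow> quat \<Rightarrow> quat \<Rightarrow> quat" where
  "qmul a b (Quat x0 x1 x2 x3) (Quat y0 y1 y2 y3) =
     Quat (x0*y0 + a*x1*y1 + b*x2*y2 - a*b*x3*y3)
          (x0*y1 + x1*y0 - b*x2*y3 + b*x3*y2)
          (x0*y2 + x2*y0 + a*x1*y3 - a*x3*y1)
          (x0*y3 + x3*y0 + x1*y2 - x2*y1)"

fun qconj :: "quat \<Rightarrow> quat" where
  "qconj (Quat x0 x1 x2 x3) = Quat x0 (-x1) (-x2) (-x3)"

definition qtr :: "quat \<Rightarrow> rat" where "qtr x = 2 * q0 x"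

fun qnorm :: "rat \<Rightarrow> rat \<Rightarrow> quat \<Rightarrow> rat" where
  "qnorm a b (Quat x0 x1 x2 x3) = x0^2 - a*x1^2 - b*x2^2 + a*b*x3^2"

text \<open>The Hilbert symbol (a,b)_q at a finite prime q is trivial iff the conic
  a x^2 + b y^2 = z^2 has a nontrivial solution in Q_q, iff it has a primitive
  solution modulo q^k for every k.\<close>
definition hilbert_split_at :: "int \<Rightarrow> int \<Rightarrow> int \<Rightarrow> bool" where
  "hilbert_split_at a b q \<longleftrightarrow>
     (\<forall>k::nat. \<exists>x y z::int. [a*x^2 + b*y^2 = z^2] (mod q^k) \<and>
                        \<not> (q dvd x \<and> q dvd y \<and> q dvd z))"

text \<open>(a,b)_Q is ramified exactly at p and \<infinity> (i.e. is a model of B_p).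
  Ramified at \<infinity> iff a<0 and b<0.\<close>
definition ramified_exactly_at_p_inf :: "int \<Rightarrow> int \<Rightarrow> int \<Rightarrow> bool" where
  "ramified_exactly_at_p_inf p a b \<longleftrightarrow>
     a < 0 \<and> b < 0 \<and> (\<forall>q::int. prime q \<longrightarrow> (\<not> hilbert_split_at a b q \<longleftrightarrow> q = p))"

definition is_order :: "rat \<Rightarrow> rat \<Rightarrow> quat set \<Rightarrow> bool" where
  "is_order a b R \<longleftrightarrow>
     qof 1 \<in> R \<and>
     (\<forall>x\<in>R. \<forall>y\<in>R. qadd x y \<in> R \<and> qmul a b x y \<in> R) \<and>
     (\<forall>x\<in>R. qneg x \<in> R) \<and>
     (\<exists>e0 e1 e2 e3.
        R = {qadd (qadd (qscale (of_int c0) e0) (qscale (of_int c1) e1))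
                  (qadd (qscale (of_int c2) e2) (qscale (of_int c3) e3)) | c0 c1 c2 c3. True} \<and>
        (\<forall>c0 c1 c2 c3. qadd (qadd (qscale c0 e0) (qscale c1 e1))
                             (qadd (qscale c2 e2) (qscale c3 e3)) = qof 0
            \<longrightarrow> c0 = 0 \<and> c1 = 0 \<and> c2 = 0 \<and> c3 = 0))"

definition gross_lattice :: "quat set \<Rightarrow> quat set" where
  "gross_lattice R = {qsub (qscale 2 x) (qof (qtr x)) | x. x \<in> R}"

end

theory Submission imports Defs begin

fun c1 :: "quat \<Rightarrow> rat" where "c1 (Quat x0 x1 x2 x3) = x1"
fun c2 :: "quat \<Rightarrow> rat" where "c2 (Quat x0 x1 x2 x3) = x2"
fun c3 :: "quat \<Rightarrow> rat" where "c3 (Quat x0 x1 x2 x3) = x3"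

definition qint :: "int \<Rightarrow> quat \<Rightarrow> bool" where
  "qint L x \<longleftrightarrow> of_int L * q0 x \<in> \<int> \<and> of_int L * c1 x \<in> \<int> \<and> of_int L * c2 x \<in> \<int> \<and> of_int L * c3 x \<in> \<int>"

lemma rat_denom: "\<exists>d::int. d > 0 \<and> of_int d * (r::rat) \<in> \<int>"
proof -
  obtain n d where q: "quotient_of r = (n, d)" by (cases "quotient_of r") auto
  have "d > 0" using quotient_of_denom_pos[OF q] .
  moreover have "r = of_int n / of_int d" using quotient_of_div[OF q] .
  ultimately show ?thesis by (intro exI[of _ d]) auto
qed

lemma Ints_mult_int: "r \<in> \<int> \<Longrightarrow> of_int M * r \<in> (\<int>::rat set)"
  by (metis Ints_mult Ints_of_int)

lemma qint_mult: assumes "qint L x" shows "qint (L*M) x"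
proof -
  have e: "of_int (L*M) * r = of_int M * (of_int L * r)" for r :: rat by simp
  show ?thesis using assms unfolding qint_def e by (auto intro: Ints_mult_int)
qed

lemma qint_exists: "\<exists>L>0. qint L x"
proof -
  obtain d0 where d0: "d0 > 0" "of_int d0 * q0 x \<in> \<int>" using rat_denom by blast
  obtain d1 where d1: "d1 > 0" "of_int d1 * c1 x \<in> \<int>" using rat_denom by blast
  obtain d2 where d2: "d2 > 0" "of_int d2 * c2 x \<in> \<int>" using rat_denom by blast
  obtain d3 where d3: "d3 > 0" "of_int d3 * c3 x \<in> \<int>" using rat_denom by blast
  let ?L = "d0*d1*d2*d3"
  have "of_int ?L * q0 x = of_int (d1*d2*d3) * (of_int d0 * q0 x)" by simp
  hence 0: "of_int ?L * q0 x \<in> \<int>" using Ints_mult_int[OF d0(2), of "d1*d2*d3"] by metis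
  have "of_int ?L * c1 x = of_int (d0*d2*d3) * (of_int d1 * c1 x)" by simp
  hence 1: "of_int ?L * c1 x \<in> \<int>" using Ints_mult_int[OF d1(2), of "d0*d2*d3"] by metis
  have "of_int ?L * c2 x = of_int (d0*d1*d3) * (of_int d2 * c2 x)" by simp
  hence 2: "of_int ?L * c2 x \<in> \<int>" using Ints_mult_int[OF d2(2), of "d0*d1*d3"] by metis
  have "of_int ?L * c3 x = of_int (d0*d1*d2) * (of_int d3 * c3 x)" by simp
  hence 3: "of_int ?L * c3 x \<in> \<int>" using Ints_mult_int[OF d3(2), of "d0*d1*d2"] by metis
  show ?thesis using 0 1 2 3 d0 d1 d2 d3 unfolding qint_def
    by (intro exI[of _ ?L]) auto
qed

lemma qint_add: "qint L x \<Longrightarrow> qint L y \<Longrightarrow> qint L (qadd x y)"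
  by (cases x; cases y) (auto simp: qint_def distrib_left)

lemma qint_scale: "qint L x \<Longrightarrow> qint L (qscale (of_int c) x)"
proof (cases x)
  case (Quat x0 x1 x2 x3)
  assume "qint L x"
  then show ?thesis using Quat unfolding qint_def
    by (simp add: mult.left_commute[of "of_int L"] Ints_mult_int)
qed

lemma order_qint:
  assumes "is_order a b R" shows "\<exists>L>0. \<forall>x\<in>R. qint L x"
proof -
  obtain e0 e1 e2 e3 where R: "R = {qadd (qadd (qscale (of_int c0) e0) (qscale (of_int c1) e1))
                  (qadd (qscale (of_int c2) e2) (qscale (of_int c3) e3)) | c0 c1 c2 c3. True}"
    using assms unfolding is_order_def by blast
  obtain d0 where d0: "d0 > 0" "qint d0 e0" using qint_exists by blast
  obtain d1 where d1: "d1 > 0" "qint d1 e1" using qint_exists by blast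
  obtain d2 where d2: "d2 > 0" "qint d2 e2" using qint_exists by blast
  obtain d3 where d3: "d3 > 0" "qint d3 e3" using qint_exists by blast
  let ?L = "d0*d1*d2*d3"
  have "qint ?L e0" using qint_mult[OF d0(2), of "d1*d2*d3"] by (simp add: ac_simps)
  moreover have "qint ?L e1" using qint_mult[OF d1(2), of "d0*d2*d3"] by (simp add: ac_simps)
  moreover have "qint ?L e2" using qint_mult[OF d2(2), of "d0*d1*d3"] by (simp add: ac_simps)
  moreover have "qint ?L e3" using qint_mult[OF d3(2), of "d0*d1*d2"] by (simp add: ac_simps)
  ultimately have "\<forall>x\<in>R. qint ?L x" unfolding R by (auto intro!: qint_add qint_scale)
  then show ?thesis using d0 d1 d2 d3 by (intro exI[of _ ?L]) auto
qed

lemma qint_norm: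
  assumes "qint L x" shows "of_int (L^2) * qnorm (of_int a) (of_int b) x \<in> \<int>"
proof (cases x)
  case (Quat x0 x1 x2 x3)
  have e: "of_int (L^2) * qnorm (of_int a) (of_int b) x =
     (of_int L * x0)^2 - of_int a * (of_int L * x1)^2 - of_int b * (of_int L * x2)^2
       + of_int a * of_int b * (of_int L * x3)^2"
    using Quat by (simp add: algebra_simps power2_eq_square)
  have h: "of_int L * x0 \<in> \<int>" "of_int L * x1 \<in> \<int>" "of_int L * x2 \<in> \<int>" "of_int L * x3 \<in> \<int>"
    using assms Quat unfolding qint_def by auto
  show ?thesis unfolding e
    by (intro Ints_add Ints_diff Ints_mult Ints_power h Ints_of_int)
qed

lemma qnorm_mult: "qnorm a b (qmul a b x y) = qnorm a b x * qnorm a b y"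
  by (cases x; cases y) (simp add: algebra_simps power2_eq_square)

primrec qpow :: "rat \<Rightarrow> rat \<Rightarrow> quat \<Rightarrow> nat \<Rightarrow> quat" where
  "qpow a b x 0 = qof 1"
| "qpow a b x (Suc n) = qmul a b x (qpow a b x n)"

lemma qnorm_qof1: "qnorm a b (qof 1) = 1" by (simp add: qof_def)

lemma qnorm_pow: "qnorm a b (qpow a b x n) = qnorm a b x ^ n"
  by (induction n) (simp_all add: qnorm_qof1 qnorm_mult)

lemma rat_int_lemma:
  fixes r :: rat and L :: int
  assumes L: "L > 0" and h: "\<And>n. of_int L * r ^ n \<in> \<int>"
  shows "r \<in> \<int>"
proof -
  obtain n d where q: "quotient_of r = (n, d)" by (cases "quotient_of r") auto
  have dpos: "d > 0" using quotient_of_denom_pos[OF q] .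
  have r: "r = of_int n / of_int d" using quotient_of_div[OF q] .
  have cop: "coprime n d" using quotient_of_coprime[OF q] .
  have dvd: "d ^ k dvd L" for k
  proof -
    obtain m where m: "of_int L * r ^ k = of_int m" using h[of k] Ints_cases by blast
    hence "of_int L * (of_int n)^k = (of_int m * of_int d ^ k :: rat)"
      using dpos by (simp add: r power_divide field_simps)
    hence "L * n^k = m * d^k" by (metis of_int_eq_iff of_int_mult of_int_power)
    hence "d^k dvd L * n^k" by (metis dvd_triv_right)
    moreover have "coprime (d^k) (n^k)" using cop by (simp add: coprime_commute)
    ultimately show ?thesis using coprime_dvd_mult_left_iff by blast
  qed
  have "d = 1"
  proof (rule ccontr)
    assume "d \<noteq> 1"
    hence d2: "d \<ge> 2" using dpos by linarith
    have "d ^ nat L \<le> L" using dvd[of "nat L"] L by (simp add: zdvd_imp_le)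
    moreover have "2 ^ nat L \<le> d ^ nat L" using d2 by (simp add: power_mono)
    moreover have "L < 2 ^ nat L"
    proof -
      have "nat L < 2 ^ nat L" by (rule less_exp)
      hence "int (nat L) < int (2 ^ nat L)" by linarith
      thus ?thesis using L by simp
    qed
    ultimately show False by linarith
  qed
  thus ?thesis using r by simp
qed


lemma prime_odd_not_dvd2:
  fixes p :: int assumes "prime p" "p \<noteq> 2" shows "\<not> p dvd 2"
proof
  assume "p dvd 2"
  hence "p \<le> 2" by (simp add: zdvd_imp_le)
  moreover have "p \<ge> 2" using assms(1) by (simp add: prime_ge_2_int)
  ultimately show False using assms(2) by simp
qed

lemma hensel_sq:
  fixes p s0 r :: int
  assumes p: "prime p" "p \<noteq> 2" and s0: "\<not> p dvd s0" and c: "p dvd s0^2 - r"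
  shows "\<exists>s. p^K dvd s^2 - r \<and> p dvd s - s0"
proof (induction K)
  case 0 show ?case by (intro exI[of _ s0]) simp
next
  case (Suc K)
  show ?case
  proof (cases "K = 0")
    case True then show ?thesis using c by (intro exI[of _ s0]) simp
  next
    case False
    from Suc obtain s where s: "p^K dvd s^2 - r" "p dvd s - s0" by blast
    obtain m where m: "s^2 - r = p^K * m" using s(1) by (auto elim: dvdE)
    have ns: "\<not> p dvd s"
    proof
      assume "p dvd s" hence "p dvd s - (s - s0)" using s(2) by (rule dvd_diff)
      thus False using s0 by simp
    qed
    have "coprime (2*s) p"
    proof -
      have "\<not> p dvd 2*s" using ns prime_odd_not_dvd2[OF p] p(1) by (simp add: prime_dvd_mult_iff)
      from prime_imp_coprime[OF p(1) this] show ?thesis by (simp add: coprime_commute)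
    qed
    then obtain x where x: "[2*s*x = 1] (mod p)" using cong_solve_coprime_int by blast
    define h where "h = -m*x"
    have "p dvd 2*s*x - 1" using x by (simp add: cong_iff_dvd_diff)
    hence d1: "p dvd m + 2*s*h"
    proof -
      assume "p dvd 2*s*x - 1"
      hence "p dvd m * (2*s*x - 1)" by simp
      moreover have "m + 2*s*h = - (m * (2*s*x - 1))" by (simp add: h_def algebra_simps)
      ultimately show ?thesis by simp
    qed
    have eq: "(s + p^K*h)^2 - r = p^K * (m + 2*s*h) + p^K * p^K * h^2"
      using m by (simp add: algebra_simps power2_eq_square)
    have "p^Suc K dvd p^K * (m + 2*s*h)" using d1 by (simp add: mult.commute mult_dvd_mono)
    moreover have "p^Suc K dvd p^K * p^K * h^2"
    proof -
      have "p^Suc K dvd p^(K+K)" by (rule le_imp_power_dvd) (use False in simp)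
      hence "p^Suc K dvd p^K * p^K" by (simp only: power_add)
      thus ?thesis by (rule dvd_mult2)
    qed
    ultimately have "p^Suc K dvd (s + p^K*h)^2 - r" unfolding eq by (rule dvd_add)
    moreover have "p dvd (s + p^K*h) - s0"
    proof -
      have "p dvd p^K" using False by (simp add: dvd_power)
      hence "p dvd p^K*h" by (rule dvd_mult2)
      hence "p dvd (s - s0) + p^K*h" using s(2) by simp
      thus ?thesis by (simp add: algebra_simps)
    qed
    ultimately show ?thesis by blast
  qed
qed

lemma sq_inj_mod:
  fixes p S1 S2 :: int
  assumes p: "prime p" and h: "2*h < p" and r: "0 \<le> S1" "S1 \<le> h" "0 \<le> S2" "S2 \<le> h"
    and d: "p dvd S1^2 - S2^2"
  shows "S1 = S2"
proof -
  have "S1^2 - S2^2 = (S1 - S2) * (S1 + S2)" by (simp add: algebra_simps power2_eq_square)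
  hence "p dvd (S1 - S2) \<or> p dvd (S1 + S2)" using d p by (simp add: prime_dvd_mult_iff)
  thus ?thesis
  proof
    assume a: "p dvd S1 - S2"
    show ?thesis
    proof (rule ccontr)
      assume "S1 \<noteq> S2"
      hence "\<bar>p\<bar> \<le> \<bar>S1 - S2\<bar>" using a dvd_imp_le_int by force
      thus False using r h p prime_gt_0_int[OF p] by linarith
    qed
  next
    assume a: "p dvd S1 + S2"
    show ?thesis
    proof (rule ccontr)
      assume "S1 \<noteq> S2"
      hence "S1 + S2 \<noteq> 0" using r by linarith
      hence "\<bar>p\<bar> \<le> \<bar>S1 + S2\<bar>" using a dvd_imp_le_int by force
      thus False using r h p prime_gt_0_int[OF p] by linarith
    qed
  qed
qed

lemma pigeon_sq:
  fixes p E c :: int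
  assumes p: "prime p" "p \<noteq> 2" and E: "\<not> p dvd E"
  shows "\<exists>S Y. p dvd S^2 + E*Y^2 - c"
proof -
  have p2: "p \<ge> 2" using p(1) by (simp add: prime_ge_2_int)
  have "odd p"
  proof
    assume "even p" hence "2 dvd p" by simp
    hence "2 = p" using p(1) primes_dvd_imp_eq[of 2 p] by simp
    thus False using p(2) by simp
  qed
  obtain h where hp: "p = 2*h + 1" using \<open>odd p\<close> by (rule oddE)
  have h0: "h \<ge> 0" using p2 hp by linarith
  define A where "A = (\<lambda>S. S^2 mod p) ` {0..h}"
  define B where "B = (\<lambda>Y. (c - E*Y^2) mod p) ` {0..h}"
  have injA: "inj_on (\<lambda>S. S^2 mod p) {0..h}"
  proof (rule inj_onI)
    fix x y assume xy: "x \<in> {0..h}" "y \<in> {0..h}" "x^2 mod p = y^2 mod p"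
    hence "p dvd x^2 - y^2" by (simp add: mod_eq_dvd_iff)
    thus "x = y" using sq_inj_mod[OF p(1), of h x y] xy hp by auto
  qed
  have injB: "inj_on (\<lambda>Y. (c - E*Y^2) mod p) {0..h}"
  proof (rule inj_onI)
    fix x y assume xy: "x \<in> {0..h}" "y \<in> {0..h}" "(c - E*x^2) mod p = (c - E*y^2) mod p"
    hence "p dvd (c - E*x^2) - (c - E*y^2)" by (simp add: mod_eq_dvd_iff)
    moreover have "(c - E*x^2) - (c - E*y^2) = E * (y^2 - x^2)" by (simp add: algebra_simps)
    ultimately have "p dvd E * (y^2 - x^2)" by simp
    hence "p dvd y^2 - x^2" using E p(1) by (simp add: prime_dvd_mult_iff)
    thus "x = y" using sq_inj_mod[OF p(1), of h y x] xy hp by auto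
  qed
  have cA: "card A = nat (h+1)" unfolding A_def using card_image[OF injA] h0 by simp
  have cB: "card B = nat (h+1)" unfolding B_def using card_image[OF injB] h0 by simp
  have sub: "A \<union> B \<subseteq> {0..<p}" unfolding A_def B_def using p2 by (auto intro: pos_mod_bound pos_mod_sign)
  hence "card (A \<union> B) \<le> card {0..<p}" by (intro card_mono) auto
  hence cU: "card (A \<union> B) \<le> nat p" by simp
  have fin: "finite A" "finite B" unfolding A_def B_def by auto
  have "card A + card B = card (A \<union> B) + card (A \<inter> B)" using card_Un_Int[OF fin] .
  hence "card (A \<inter> B) \<noteq> 0" using cA cB cU hp h0 by linarith
  hence "A \<inter> B \<noteq> {}" by auto
  then obtain S Y where "S^2 mod p = (c - E*Y^2) mod p" unfolding A_def B_def by auto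
  hence "p dvd S^2 - (c - E*Y^2)" by (simp add: mod_eq_dvd_iff)
  hence "p dvd S^2 + E*Y^2 - c" by (simp add: algebra_simps)
  thus ?thesis by blast
qed

lemma prime_not_dvd_pow_coprime:
  fixes p E :: int assumes "prime p" "\<not> p dvd E" shows "coprime E (p^K)"
proof -
  have "coprime p E" using prime_imp_coprime[OF assms] .
  hence "coprime E p" by (simp add: coprime_commute)
  thus ?thesis by simp
qed

lemma lemmaH:
  fixes p E c :: int
  assumes p: "prime p" "p \<noteq> 2" and E: "\<not> p dvd E" and c: "\<not> p dvd c"
  shows "\<exists>S Y. p^K dvd S^2 + E*Y^2 - c"
proof -
  obtain S0 Y0 where SY: "p dvd S0^2 + E*Y0^2 - c" using pigeon_sq[OF p E] by blast
  show ?thesis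
  proof (cases "p dvd S0")
    case False
    have "p dvd S0^2 - (c - E*Y0^2)" using SY by (simp add: algebra_simps)
    then obtain S where "p^K dvd S^2 - (c - E*Y0^2)" using hensel_sq[OF p False] by blast
    hence "p^K dvd S^2 + E*Y0^2 - c" by (simp add: algebra_simps)
    thus ?thesis by blast
  next
    case True
    have nY: "\<not> p dvd E*Y0"
    proof
      assume "p dvd E*Y0"
      hence "p dvd (E*Y0)*Y0" by simp
      moreover have "p dvd S0^2" using True by (simp add: power2_eq_square)
      ultimately have "p dvd S0^2 + (E*Y0)*Y0" by simp
      hence "p dvd (S0^2 + E*Y0^2 - c) - (S0^2 + (E*Y0)*Y0)" using SY dvd_diff by blast
      moreover have "(S0^2 + E*Y0^2 - c) - (S0^2 + (E*Y0)*Y0) = - c" by (simp add: power2_eq_square)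
      ultimately show False using c by simp
    qed
    define r where "r = E*(c - S0^2)"
    have "(E*Y0)^2 - r = E * (S0^2 + E*Y0^2 - c)" unfolding r_def by (simp add: algebra_simps power2_eq_square)
    hence "p dvd (E*Y0)^2 - r" using SY by simp
    then obtain s where s: "p^K dvd s^2 - r" using hensel_sq[OF p nY] by blast
    obtain e where e: "[E*e = 1] (mod p^K)" using cong_solve_coprime_int prime_not_dvd_pow_coprime[OF p(1) E] by blast
    hence e': "p^K dvd E*e - 1" by (simp add: cong_iff_dvd_diff)
    have eq: "E * (S0^2 + E*(e*s)^2 - c) = (s^2 - r) + (E*e - 1)*((E*e+1)*s^2)"
      unfolding r_def by (simp add: algebra_simps power2_eq_square)
    have "p^K dvd E * (S0^2 + E*(e*s)^2 - c)" unfolding eq using s e' by simp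
    hence "p^K dvd S0^2 + E*(e*s)^2 - c"
      using prime_not_dvd_pow_coprime[OF p(1) E] by (simp add: coprime_commute coprime_dvd_mult_right_iff)
    thus ?thesis by blast
  qed
qed

lemma lemmaG:
  fixes p A B C :: int
  assumes p: "prime p" "p \<noteq> 2" and A: "\<not> p dvd A" and E: "\<not> p dvd (A*C - B^2)"
  shows "\<exists>X Y. p^K dvd A*X^2 + 2*B*X*Y + C*Y^2 + (A*C - B^2)"
proof -
  define E where "E = A*C - B^2"
  have E': "\<not> p dvd E" using E unfolding E_def .
  have c: "\<not> p dvd (-A*E)" using A E' p(1) by (simp add: prime_dvd_mult_iff)
  obtain S Y where SY: "p^K dvd S^2 + E*Y^2 - (-A*E)" using lemmaH[OF p E' c] by blast
  obtain a' where a': "[A*a' = 1] (mod p^K)" using cong_solve_coprime_int prime_not_dvd_pow_coprime[OF p(1) A] by blast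
  hence a'': "p^K dvd A*a' - 1" by (simp add: cong_iff_dvd_diff)
  define X where "X = a' * (S - B*Y)"
  have eq: "A * (A*X^2 + 2*B*X*Y + C*Y^2 + E) = (S^2 + E*Y^2 - (-A*E)) + (A*a' - 1) * ((2*S + (A*a'-1)*(S - B*Y))*(S - B*Y))"
    unfolding X_def E_def by (simp add: algebra_simps power2_eq_square)
  have "p^K dvd A * (A*X^2 + 2*B*X*Y + C*Y^2 + E)" unfolding eq using SY a'' by simp
  hence "p^K dvd A*X^2 + 2*B*X*Y + C*Y^2 + E"
    using prime_not_dvd_pow_coprime[OF p(1) A] by (simp add: coprime_commute coprime_dvd_mult_right_iff)
  thus ?thesis unfolding E_def by blast
qed

lemma lemmaT:
  fixes p N1 N2 t :: int
  assumes p: "prime p" "p \<noteq> 2" and D: "\<not> p dvd (N1*N2 - t^2)"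
  shows "\<exists>X Y. p^K dvd N1*X^2 + 2*t*X*Y + N2*Y^2 + (N1*N2 - t^2)"
proof (cases "p dvd N1")
  case False
  show ?thesis using lemmaG[OF p False D] .
next
  case True
  show ?thesis
  proof (cases "p dvd N2")
    case False
    have D': "\<not> p dvd (N2*N1 - t^2)" using D by (simp add: mult.commute)
    obtain X Y where "p^K dvd N2*X^2 + 2*t*X*Y + N1*Y^2 + (N2*N1 - t^2)" using lemmaG[OF p False D'] by blast
    moreover have "N2*X^2 + 2*t*X*Y + N1*Y^2 + (N2*N1 - t^2) = N1*Y^2 + 2*t*Y*X + N2*X^2 + (N1*N2 - t^2)"
      by (simp add: algebra_simps)
    ultimately show ?thesis by metis
  next
    case True2: True
    have nt: "\<not> p dvd t"
    proof
      assume "p dvd t"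
      hence "p dvd N1*N2 - t^2" using True by (simp add: power2_eq_square)
      thus False using D by simp
    qed
    define A where "A = N1 + 2*t + N2"
    have nA: "\<not> p dvd A"
    proof
      assume "p dvd A"
      hence "p dvd A - N1 - N2" using True True2 by simp
      hence "p dvd 2*t" unfolding A_def by simp
      thus False using nt prime_odd_not_dvd2[OF p] p(1) by (simp add: prime_dvd_mult_iff)
    qed
    have D': "\<not> p dvd (A*N2 - (t+N2)^2)"
    proof -
      have "A*N2 - (t+N2)^2 = N1*N2 - t^2" unfolding A_def by (simp add: algebra_simps power2_eq_square)
      thus ?thesis using D by simp
    qed
    obtain X Y where XY: "p^K dvd A*X^2 + 2*(t+N2)*X*Y + N2*Y^2 + (A*N2 - (t+N2)^2)" using lemmaG[OF p nA D'] by blast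
    have "A*X^2 + 2*(t+N2)*X*Y + N2*Y^2 + (A*N2 - (t+N2)^2) = N1*X^2 + 2*t*X*(X+Y) + N2*(X+Y)^2 + (N1*N2 - t^2)"
      unfolding A_def by (simp add: algebra_simps power2_eq_square)
    thus ?thesis using XY by metis
  qed
qed

definition PP :: "int \<Rightarrow> int \<Rightarrow> int \<Rightarrow> int \<Rightarrow> int \<Rightarrow> int" where
  "PP a b x y z = -a*x^2 - b*y^2 + a*b*z^2"
definition BB :: "int \<Rightarrow> int \<Rightarrow> int \<Rightarrow> int \<Rightarrow> int \<Rightarrow> int \<Rightarrow> int \<Rightarrow> int \<Rightarrow> int" where
  "BB a b x1 x2 x3 y1 y2 y3 = -a*x1*y1 - b*x2*y2 + a*b*x3*y3"

lemma extract3: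
  fixes p x y z :: int
  assumes p: "prime p" and b: "\<forall>j. p^j dvd x \<and> p^j dvd y \<and> p^j dvd z \<longrightarrow> j < c"
  shows "\<exists>j x' y' z'. j < c \<and> x = p^j*x' \<and> y = p^j*y' \<and> z = p^j*z' \<and> \<not>(p dvd x' \<and> p dvd y' \<and> p dvd z')"
  using b
proof (induction c arbitrary: x y z)
  case 0
  then show ?case by (metis power_0 one_dvd less_nat_zero_code)
next
  case (Suc c)
  show ?case
  proof (cases "p dvd x \<and> p dvd y \<and> p dvd z")
    case False
    then show ?thesis by (intro exI[of _ 0] exI[of _ x] exI[of _ y] exI[of _ z]) simp
  next
    case True
    then obtain x1 y1 z1 where xyz: "x = p*x1" "y = p*y1" "z = p*z1" by (meson dvdE)
    have "\<forall>j. p^j dvd x1 \<and> p^j dvd y1 \<and> p^j dvd z1 \<longrightarrow> j < c"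
    proof (intro allI impI)
      fix j assume "p^j dvd x1 \<and> p^j dvd y1 \<and> p^j dvd z1"
      hence "p^Suc j dvd x \<and> p^Suc j dvd y \<and> p^Suc j dvd z" unfolding xyz by (simp add: mult_dvd_mono)
      thus "j < c" using Suc.prems by fastforce
    qed
    then obtain j x' y' z' where h: "j < c" "x1 = p^j*x'" "y1 = p^j*y'" "z1 = p^j*z'"
        "\<not>(p dvd x' \<and> p dvd y' \<and> p dvd z')" using Suc.IH by blast
    show ?thesis using h xyz by (intro exI[of _ "Suc j"] exI[of _ x'] exI[of _ y'] exI[of _ z']) simp
  qed
qed

lemma pow_dvd_bound:
  fixes p x :: int assumes p: "prime p" and x: "x \<noteq> 0" and d: "p^j dvd x"
  shows "j < nat \<bar>x\<bar>"
proof -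
  have "p^j \<le> \<bar>x\<bar>" using dvd_imp_le_int[OF x d] p by (simp add: abs_of_pos prime_gt_0_int)
  moreover have "(2::int)^j \<le> p^j" using prime_ge_2_int[OF p] by (simp add: power_mono)
  moreover have "int j < 2^j"
  proof -
    have "j < 2^j" by (rule less_exp)
    hence "int j < int (2^j)" by linarith
    thus ?thesis by simp
  qed
  ultimately show ?thesis by linarith
qed

lemma pow_cancel:
  fixes p Q :: int assumes p: "p \<noteq> 0" and d: "p^K dvd p^m * Q" and m: "m \<le> K"
  shows "p^(K-m) dvd Q"
proof -
  have "p^K = p^m * p^(K-m)" using m by (simp add: power_add[symmetric])
  thus ?thesis using d p by simp
qed

lemma core_split:
  fixes p a b L N1 N2 t U1 U2 U3 V1 V2 V3 :: int
  assumes p: "prime p" "p \<noteq> 2" and a: "a \<noteq> 0" and b: "b \<noteq> 0" and L: "L \<noteq> 0"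
    and hU: "PP a b U1 U2 U3 = L^2*N1" and hV: "PP a b V1 V2 V3 = L^2*N2"
    and hUV: "BB a b U1 U2 U3 V1 V2 V3 = L^2*t"
    and D: "\<not> p dvd (N1*N2 - t^2)"
  shows "hilbert_split_at a b p"
  unfolding hilbert_split_at_def
proof
  fix k :: nat
  define D where "D = N1*N2 - t^2"
  define W1 where "W1 = b*(U3*V2 - U2*V3)"
  define W2 where "W2 = a*(U1*V3 - U3*V1)"
  define W3 where "W3 = U1*V2 - U2*V1"
  have "PP a b W1 W2 W3 = PP a b U1 U2 U3 * PP a b V1 V2 V3 - (BB a b U1 U2 U3 V1 V2 V3)^2"
    unfolding PP_def BB_def W1_def W2_def W3_def by (simp add: algebra_simps power2_eq_square)
  hence hW: "PP a b W1 W2 W3 = L^4 * D" unfolding hU hV hUV D_def by (simp add: algebra_simps power2_eq_square power4_eq_xxxx)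
  have hUW: "BB a b U1 U2 U3 W1 W2 W3 = 0"
    unfolding BB_def W1_def W2_def W3_def by (simp add: algebra_simps)
  have hVW: "BB a b V1 V2 V3 W1 W2 W3 = 0"
    unfolding BB_def W1_def W2_def W3_def by (simp add: algebra_simps)
  have D0: "D \<noteq> 0" using D unfolding D_def by auto
  define c1 where "c1 = nat \<bar>L^4 * D\<bar>"
  define c2 where "c2 = nat \<bar>a * b\<bar>"
  define K where "K = k + 2*c1 + 2*c2"
  obtain X Y where XY: "p^K dvd N1*X^2 + 2*t*X*Y + N2*Y^2 + D" using lemmaT[OF p D] unfolding D_def by blast
  define Z1 where "Z1 = L*X*U1 + L*Y*V1 + W1"
  define Z2 where "Z2 = L*X*U2 + L*Y*V2 + W2"
  define Z3 where "Z3 = L*X*U3 + L*Y*V3 + W3"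
  have "PP a b Z1 Z2 Z3 = (L*X)^2 * PP a b U1 U2 U3 + (L*Y)^2 * PP a b V1 V2 V3 + PP a b W1 W2 W3
      + 2*(L*X)*(L*Y)*BB a b U1 U2 U3 V1 V2 V3 + 2*(L*X)*BB a b U1 U2 U3 W1 W2 W3 + 2*(L*Y)*BB a b V1 V2 V3 W1 W2 W3"
    unfolding PP_def BB_def Z1_def Z2_def Z3_def by (simp add: algebra_simps power2_eq_square)
  hence hP: "PP a b Z1 Z2 Z3 = L^4 * (N1*X^2 + 2*t*X*Y + N2*Y^2 + D)"
    unfolding hU hV hUV hW hUW hVW by (simp add: algebra_simps power2_eq_square power4_eq_xxxx)
  have "BB a b Z1 Z2 Z3 W1 W2 W3 = (L*X) * BB a b U1 U2 U3 W1 W2 W3 + (L*Y) * BB a b V1 V2 V3 W1 W2 W3 + PP a b W1 W2 W3"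
    unfolding PP_def BB_def Z1_def Z2_def Z3_def by (simp add: algebra_simps power2_eq_square)
  hence hB: "BB a b Z1 Z2 Z3 W1 W2 W3 = L^4 * D" unfolding hUW hVW hW by simp
  have bound1: "\<forall>j. p^j dvd Z1 \<and> p^j dvd Z2 \<and> p^j dvd Z3 \<longrightarrow> j < c1"
  proof (intro allI impI)
    fix j assume h: "p^j dvd Z1 \<and> p^j dvd Z2 \<and> p^j dvd Z3"
    have "p^j dvd BB a b Z1 Z2 Z3 W1 W2 W3" unfolding BB_def using h by simp
    hence "p^j dvd L^4 * D" using hB by simp
    moreover have "L^4 * D \<noteq> 0" using L D0 by simp
    ultimately show "j < c1" unfolding c1_def using pow_dvd_bound[OF p(1)] by blast
  qed
  obtain j Z1' Z2' Z3' where j: "j < c1" "Z1 = p^j*Z1'" "Z2 = p^j*Z2'" "Z3 = p^j*Z3'"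
      "\<not>(p dvd Z1' \<and> p dvd Z2' \<and> p dvd Z3')" using extract3[OF p(1) bound1] by blast
  have "PP a b Z1 Z2 Z3 = p^(2*j) * PP a b Z1' Z2' Z3'" unfolding j PP_def
    by (simp add: algebra_simps power2_eq_square power_mult)
  hence "p^K dvd p^(2*j) * PP a b Z1' Z2' Z3'" using hP XY by (metis dvd_mult2 mult.commute)
  hence d1: "p^(K - 2*j) dvd PP a b Z1' Z2' Z3'"
    using pow_cancel[of p K "2*j"] p(1) j(1) unfolding K_def by (simp add: prime_gt_0_int)
  define x where "x = b*Z2'"
  define y where "y = a*Z1'"
  define z where "z = a*b*Z3'"
  have conic: "a*x^2 + b*y^2 - z^2 = -(a*b) * PP a b Z1' Z2' Z3'"
    unfolding x_def y_def z_def PP_def by (simp add: algebra_simps power2_eq_square)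
  have bound2: "\<forall>i. p^i dvd x \<and> p^i dvd y \<and> p^i dvd z \<longrightarrow> i < c2"
  proof (intro allI impI)
    fix i assume h: "p^i dvd x \<and> p^i dvd y \<and> p^i dvd z"
    have "p^i dvd a*b"
    proof (cases "p dvd Z1'")
      case False
      hence "coprime (p^i) Z1'" using prime_imp_coprime[OF p(1) False] by simp
      hence "p^i dvd a" using h unfolding y_def by (simp add: coprime_dvd_mult_left_iff)
      thus ?thesis by simp
    next
      case True1: True
      show ?thesis
      proof (cases "p dvd Z2'")
        case False
        hence "coprime (p^i) Z2'" using prime_imp_coprime[OF p(1) False] by simp
        hence "p^i dvd b" using h unfolding x_def by (simp add: coprime_dvd_mult_left_iff)
        thus ?thesis by simp
      next
        case True
        hence False: "\<not> p dvd Z3'" using True1 j(5) by blast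
        hence "coprime (p^i) Z3'" using prime_imp_coprime[OF p(1) False] by simp
        thus "p^i dvd a*b" using h unfolding z_def by (simp add: coprime_dvd_mult_left_iff)
      qed
    qed
    moreover have "a*b \<noteq> 0" using a b by simp
    ultimately show "i < c2" unfolding c2_def using pow_dvd_bound[OF p(1)] by blast
  qed
  obtain i x' y' z' where i: "i < c2" "x = p^i*x'" "y = p^i*y'" "z = p^i*z'"
      "\<not>(p dvd x' \<and> p dvd y' \<and> p dvd z')" using extract3[OF p(1) bound2] by blast
  have "a*x^2 + b*y^2 - z^2 = p^(2*i) * (a*x'^2 + b*y'^2 - z'^2)" unfolding i
    by (simp add: algebra_simps power2_eq_square power_mult)
  moreover have "p^(K - 2*j) dvd a*x^2 + b*y^2 - z^2" unfolding conic using d1 by simp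
  ultimately have "p^(K - 2*j) dvd p^(2*i) * (a*x'^2 + b*y'^2 - z'^2)" by simp
  hence "p^(K - 2*j - 2*i) dvd (a*x'^2 + b*y'^2 - z'^2)"
    using pow_cancel[of p "K - 2*j" "2*i"] p(1) i(1) j(1) unfolding K_def by (simp add: prime_gt_0_int)
  moreover have "p^k dvd p^(K - 2*j - 2*i)" using i(1) j(1) unfolding K_def by (intro le_imp_power_dvd) linarith
  ultimately have "p^k dvd (a*x'^2 + b*y'^2) - z'^2" by (meson dvd_trans)
  hence "[a*x'^2 + b*y'^2 = z'^2] (mod p^k)" by (simp add: cong_iff_dvd_diff)
  thus "\<exists>x y z. [a * x\<^sup>2 + b * y\<^sup>2 = z\<^sup>2] (mod p ^ k) \<and> \<not> (p dvd x \<and> p dvd y \<and> p dvd z)"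
    using i(5) by blast
qed


lemma order_facts:
  assumes "is_order a b R"
  shows "qof 1 \<in> R" "\<And>x y. x \<in> R \<Longrightarrow> y \<in> R \<Longrightarrow> qadd x y \<in> R"
    "\<And>x y. x \<in> R \<Longrightarrow> y \<in> R \<Longrightarrow> qmul a b x y \<in> R"
  using assms unfolding is_order_def by auto

lemma qpow_in: "is_order a b R \<Longrightarrow> x \<in> R \<Longrightarrow> qpow a b x n \<in> R"
  by (induction n) (auto simp: order_facts)

lemma order_norm_int:
  assumes R: "is_order (of_int a) (of_int b) R" and x: "x \<in> R"
  shows "qnorm (of_int a) (of_int b) x \<in> \<int>"
proof -
  obtain L where L: "L > 0" "\<forall>x\<in>R. qint L x" using order_qint[OF R] by blast
  have "of_int (L^2) * qnorm (of_int a) (of_int b) x ^ n \<in> \<int>" for n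
  proof -
    have "qint L (qpow (of_int a) (of_int b) x n)" using L qpow_in[OF R x] by blast
    from qint_norm[OF this, of a b] show ?thesis by (simp add: qnorm_pow)
  qed
  moreover have "L^2 > 0" using L by simp
  ultimately show ?thesis using rat_int_lemma by blast
qed

lemma order_tr_int:
  assumes R: "is_order (of_int a) (of_int b) R" and x: "x \<in> R"
  shows "qtr x \<in> \<int>"
proof -
  have x1: "qadd x (qof 1) \<in> R" using order_facts[OF R] x by auto
  have "qtr x = qnorm (of_int a) (of_int b) (qadd x (qof 1)) - qnorm (of_int a) (of_int b) x - 1"
    by (cases x) (simp add: qtr_def qof_def algebra_simps power2_eq_square)
  thus ?thesis using order_norm_int[OF R x1] order_norm_int[OF R x] by simp
qed

lemma least_part:
  fixes p t N1 N2 :: int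
  assumes p: "prime p" and tp: "2*\<bar>t\<bar> \<le> p" and d: "p dvd t^2 - N1*N2"
  shows "(LEAST t'::nat. \<exists>k::int. (of_nat t' :: rat)^2 - of_int N1 * of_int N2 = of_int (p*k)) = nat \<bar>t\<bar>"
proof -
  have iff: "(\<exists>k::int. (of_nat y :: rat)^2 - of_int N1 * of_int N2 = of_int (p*k)) \<longleftrightarrow> p dvd int y^2 - N1*N2" for y
  proof -
    have "(of_nat y :: rat)^2 - of_int N1 * of_int N2 = of_int (int y^2 - N1*N2)" by simp
    hence "(\<exists>k::int. (of_nat y :: rat)^2 - of_int N1 * of_int N2 = of_int (p*k)) \<longleftrightarrow> (\<exists>k. int y^2 - N1*N2 = p*k)"
      by (metis of_int_eq_iff)
    thus ?thesis by (auto simp: dvd_def)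
  qed
  show ?thesis unfolding iff
  proof (rule Least_equality)
    show "p dvd int (nat \<bar>t\<bar>)^2 - N1*N2" using d by simp
  next
    fix y assume y: "p dvd int y^2 - N1*N2"
    show "nat \<bar>t\<bar> \<le> y"
    proof (rule ccontr)
      assume "\<not> nat \<bar>t\<bar> \<le> y"
      hence yl: "int y < \<bar>t\<bar>" by linarith
      have "p dvd (t^2 - N1*N2) - (int y^2 - N1*N2)" using d y by (rule dvd_diff)
      moreover have "(t^2 - N1*N2) - (int y^2 - N1*N2) = (\<bar>t\<bar> - int y) * (\<bar>t\<bar> + int y)"
        by (simp add: algebra_simps power2_eq_square)
      ultimately have "p dvd (\<bar>t\<bar> - int y) \<or> p dvd (\<bar>t\<bar> + int y)" using p by (simp add: prime_dvd_mult_iff)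
      moreover have "\<not> p dvd (\<bar>t\<bar> - int y)"
      proof
        assume "p dvd (\<bar>t\<bar> - int y)"
        hence "p \<le> \<bar>t\<bar> - int y" using yl by (simp add: zdvd_imp_le)
        thus False using tp yl prime_gt_0_int[OF p] by linarith
      qed
      moreover have "\<not> p dvd (\<bar>t\<bar> + int y)"
      proof
        assume "p dvd (\<bar>t\<bar> + int y)"
        hence "p \<le> \<bar>t\<bar> + int y" using yl by (simp add: zdvd_imp_le)
        thus False using tp yl by linarith
      qed
      ultimately show False by blast
    qed
  qed
qed

theorem corollary3p14:
  fixes p a b :: int and R :: "quat set" and \<beta>1 \<beta>2 :: quat
  assumes "prime p"
    and "ramified_exactly_at_p_inf p a b"
    and "is_order (of_int a) (of_int b) R"
    and "\<beta>1 \<in> gross_lattice R" and "\<beta>2 \<in> gross_lattice R"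
    and "\<forall>c d::rat. qadd (qscale c \<beta>1) (qscale d \<beta>2) = qof 0 \<longrightarrow> c = 0 \<and> d = 0"
    and "qnorm (of_int a) (of_int b) \<beta>1 \<le> of_int p"
    and "\<forall>n::int. qnorm (of_int a) (of_int b) \<beta>2
                 \<le> qnorm (of_int a) (of_int b) (qadd \<beta>2 (qscale (of_int n) \<beta>1))"
  shows "\<bar>qtr (qmul (of_int a) (of_int b) \<beta>1 (qconj \<beta>2)) / 2\<bar>
       = of_nat (LEAST t::nat. \<exists>k::int.
            of_nat t ^ 2 - qnorm (of_int a) (of_int b) \<beta>1 * qnorm (of_int a) (of_int b) \<beta>2
              = of_int (p * k))"
proof -
  note p = assms(1) and R = assms(3)
  have ab: "a < 0" "b < 0" and ram: "\<not> hilbert_split_at a b p"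
    using assms(2) p unfolding ramified_exactly_at_p_inf_def by auto
  obtain x1 where x1: "x1 \<in> R" "\<beta>1 = qsub (qscale 2 x1) (qof (qtr x1))"
    using assms(4) unfolding gross_lattice_def by blast
  obtain x2 where x2: "x2 \<in> R" "\<beta>2 = qsub (qscale 2 x2) (qof (qtr x2))"
    using assms(5) unfolding gross_lattice_def by blast
  have x12: "qadd x1 x2 \<in> R" using order_facts[OF R] x1 x2 by auto
  obtain L where L: "L > 0" "\<forall>x\<in>R. qint L x" using order_qint[OF R] by blast
  obtain s0 s1 s2 s3 where xs: "x1 = Quat s0 s1 s2 s3" by (cases x1)
  obtain r0 r1 r2 r3 where xr: "x2 = Quat r0 r1 r2 r3" by (cases x2)
  obtain n1 where n1: "qnorm (of_int a) (of_int b) x1 = of_int n1" using order_norm_int[OF R x1(1)] Ints_cases by blast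
  obtain n2 where n2: "qnorm (of_int a) (of_int b) x2 = of_int n2" using order_norm_int[OF R x2(1)] Ints_cases by blast
  obtain n12 where n12: "qnorm (of_int a) (of_int b) (qadd x1 x2) = of_int n12" using order_norm_int[OF R x12] Ints_cases by blast
  obtain T1 where T1: "qtr x1 = of_int T1" using order_tr_int[OF R x1(1)] Ints_cases by blast
  obtain T2 where T2: "qtr x2 = of_int T2" using order_tr_int[OF R x2(1)] Ints_cases by blast
  define N1 where "N1 = 4*n1 - T1^2"
  define N2 where "N2 = 4*n2 - T2^2"
  define t where "t = 2*(n12 - n1 - n2) - T1*T2"
  have b1: "\<beta>1 = Quat 0 (2*s1) (2*s2) (2*s3)" using x1(2) xs by (simp add: qsub_def qof_def qtr_def)
  have b2: "\<beta>2 = Quat 0 (2*r1) (2*r2) (2*r3)" using x2(2) xr by (simp add: qsub_def qof_def qtr_def)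
  have en1: "of_int n1 = s0^2 - of_int a * s1^2 - of_int b * s2^2 + of_int a * of_int b * s3^2" using n1 xs by simp
  have en2: "of_int n2 = r0^2 - of_int a * r1^2 - of_int b * r2^2 + of_int a * of_int b * r3^2" using n2 xr by simp
  have en12: "of_int n12 = (s0+r0)^2 - of_int a * (s1+r1)^2 - of_int b * (s2+r2)^2 + of_int a * of_int b * (s3+r3)^2"
    using n12 xs xr by simp
  have eT1: "of_int T1 = 2*s0" using T1 xs by (simp add: qtr_def)
  have eT2: "of_int T2 = 2*r0" using T2 xr by (simp add: qtr_def)
  have hN1: "qnorm (of_int a) (of_int b) \<beta>1 = of_int N1"
    unfolding b1 N1_def using en1 eT1 by (simp add: algebra_simps power2_eq_square)
  have hN2: "qnorm (of_int a) (of_int b) \<beta>2 = of_int N2"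
    unfolding b2 N2_def using en2 eT2 by (simp add: algebra_simps power2_eq_square)
  have ht1: "qtr (qmul (of_int a) (of_int b) \<beta>1 (qconj \<beta>2)) / 2 =
      - of_int a * (2*s1) * (2*r1) - of_int b * (2*s2) * (2*r2) + of_int a * of_int b * (2*s3) * (2*r3)"
    unfolding b1 b2 by (simp add: qtr_def)
  have ht2: "(of_int t :: rat) = 2*(of_int n12 - of_int n1 - of_int n2) - of_int T1 * of_int T2"
    unfolding t_def by simp
  have ht: "qtr (qmul (of_int a) (of_int b) \<beta>1 (qconj \<beta>2)) / 2 = of_int t"
    unfolding ht1 ht2 en1 en2 en12 eT1 eT2 by (simp add: algebra_simps power2_eq_square)
  have pD: "p dvd t^2 - N1*N2"
  proof (cases "p = 2")
    case True
    have "t^2 - N1*N2 = 2 * (2*((n12 - n1 - n2)^2 - (n12 - n1 - n2)*T1*T2 - 4*n1*n2 + n1*T2^2 + n2*T1^2))"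
      unfolding t_def N1_def N2_def by (simp add: algebra_simps power2_eq_square)
    thus ?thesis using True by simp
  next
    case False
    show ?thesis
    proof (rule ccontr)
      assume nd: "\<not> p dvd t^2 - N1*N2"
      have nd': "\<not> p dvd (N1*N2 - t^2)"
      proof
        assume "p dvd N1*N2 - t^2"
        hence "p dvd -(N1*N2 - t^2)" by (simp only: dvd_minus_iff)
        moreover have "-(N1*N2 - t^2) = t^2 - N1*N2" by simp
        ultimately show False using nd by simp
      qed
      have q1: "qint L x1" "qint L x2" using L x1 x2 by auto
      obtain u1 where u1: "of_int L * s1 = of_int u1" using q1(1) xs unfolding qint_def by (auto elim: Ints_cases)
      obtain u2 where u2: "of_int L * s2 = of_int u2" using q1(1) xs unfolding qint_def by (auto elim: Ints_cases)
      obtain u3 where u3: "of_int L * s3 = of_int u3" using q1(1) xs unfolding qint_def by (auto elim: Ints_cases)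
      obtain v1 where v1: "of_int L * r1 = of_int v1" using q1(2) xr unfolding qint_def by (auto elim: Ints_cases)
      obtain v2 where v2: "of_int L * r2 = of_int v2" using q1(2) xr unfolding qint_def by (auto elim: Ints_cases)
      obtain v3 where v3: "of_int L * r3 = of_int v3" using q1(2) xr unfolding qint_def by (auto elim: Ints_cases)
      have s: "s1 = of_int u1 / of_int L" "s2 = of_int u2 / of_int L" "s3 = of_int u3 / of_int L"
        "r1 = of_int v1 / of_int L" "r2 = of_int v2 / of_int L" "r3 = of_int v3 / of_int L"
        using u1 u2 u3 v1 v2 v3 L(1) by (auto simp: field_simps)
      have "of_int (PP a b (2*u1) (2*u2) (2*u3)) = (of_int (L^2 * N1) :: rat)"
      proof -
        have "of_int (L^2 * N1) = (of_int L)^2 * qnorm (of_int a) (of_int b) \<beta>1" using hN1 by simp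
        also have "\<dots> = of_int (PP a b (2*u1) (2*u2) (2*u3))"
          unfolding b1 PP_def s using L(1) by (simp add: field_simps power2_eq_square)
        finally show ?thesis by simp
      qed
      hence hU: "PP a b (2*u1) (2*u2) (2*u3) = L^2 * N1" by (metis of_int_eq_iff)
      have "of_int (PP a b (2*v1) (2*v2) (2*v3)) = (of_int (L^2 * N2) :: rat)"
      proof -
        have "of_int (L^2 * N2) = (of_int L)^2 * qnorm (of_int a) (of_int b) \<beta>2" using hN2 by simp
        also have "\<dots> = of_int (PP a b (2*v1) (2*v2) (2*v3))"
          unfolding b2 PP_def s using L(1) by (simp add: field_simps power2_eq_square)
        finally show ?thesis by simp
      qed
      hence hV: "PP a b (2*v1) (2*v2) (2*v3) = L^2 * N2" by (metis of_int_eq_iff)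
      have "of_int (BB a b (2*u1) (2*u2) (2*u3) (2*v1) (2*v2) (2*v3)) = (of_int (L^2 * t) :: rat)"
      proof -
        have "of_int (L^2 * t) = (of_int L)^2 * (qtr (qmul (of_int a) (of_int b) \<beta>1 (qconj \<beta>2)) / 2)" using ht by simp
        also have "\<dots> = of_int (BB a b (2*u1) (2*u2) (2*u3) (2*v1) (2*v2) (2*v3))"
          unfolding b1 b2 BB_def s using L(1) by (simp add: qtr_def field_simps power2_eq_square)
        finally show ?thesis by simp
      qed
      hence hUV: "BB a b (2*u1) (2*u2) (2*u3) (2*v1) (2*v2) (2*v3) = L^2 * t" by (metis of_int_eq_iff)
      have "hilbert_split_at a b p"
        using core_split[OF p False _ _ _ hU hV hUV nd'] ab L(1) by simp
      thus False using ram by simp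
    qed
  qed
  have mn: "qnorm (of_int a) (of_int b) (qadd \<beta>2 (qscale (of_int n) \<beta>1)) = of_int N2 + 2 * of_int n * of_int t + (of_int n)^2 * of_int N1" for n :: int
  proof -
    have "qnorm (of_int a) (of_int b) (qadd \<beta>2 (qscale (of_int n) \<beta>1)) = qnorm (of_int a) (of_int b) \<beta>2
        + 2 * of_int n * (qtr (qmul (of_int a) (of_int b) \<beta>1 (qconj \<beta>2)) / 2) + (of_int n)^2 * qnorm (of_int a) (of_int b) \<beta>1"
      unfolding ht1 unfolding b1 b2 by (simp add: algebra_simps power2_eq_square)
    thus ?thesis using hN1 hN2 ht by simp
  qed
  have m1: "(of_int N2 :: rat) \<le> of_int N2 + 2 * of_int t + of_int N1"
    using spec[OF assms(8), of 1] unfolding mn hN2 by simp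
  have m2: "(of_int N2 :: rat) \<le> of_int N2 - 2 * of_int t + of_int N1"
    using spec[OF assms(8), of "-1"] unfolding mn hN2 by simp
  have Np: "(of_int N1 :: rat) \<le> of_int p" using assms(7) hN1 by simp
  have tp: "2 * \<bar>t\<bar> \<le> p"
  proof -
    have "N2 \<le> N2 + 2*t + N1" "N2 \<le> N2 - 2*t + N1" "N1 \<le> p" using m1 m2 Np by linarith+
    thus ?thesis by linarith
  qed
  have "(LEAST t'::nat. \<exists>k::int. (of_nat t' :: rat)^2 - of_int N1 * of_int N2 = of_int (p*k)) = nat \<bar>t\<bar>"
    using least_part[OF p tp pD] .
  thus ?thesis unfolding hN1 hN2 ht by simp
qed

end
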